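(* Let $\rho>0$ be irrational and $p>0$. Suppose that complex numbers $a_{k,\ell,m}$, indexed by integers $k\ge1$, $\ell\ge m\ge0$ with $k\rho+\ell+1<p$, satisfy $$\sum_{\substack{k\ge1,\ \ell\ge m\ge0\\ k\rho+\ell+1<p}}a_{k,\ell,m}\frac{(\log n)^m}{n^{k\rho+\ell+1}}=\mathcal O(n^{-p})\quad(n\to\infty).$$ Then $a_{k,\ell,m}=0$ for all such triples $(k,\ell,m)$. *)

theory Defs
  imports "HOL-Analysis.Analysis" "HOL-Library.Landau_Symbols"
begin

definition idx_set :: "real \<Rightarrow> real \<Rightarrow> (nat \<times> nat \<times> nat) set" where
  "idx_set rho p = {(k, l, m). 1 \<le> k \<and> m \<le> l \<and> real k * rho + real l + 1 < p}"

end

theory Submission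
  imports Defs
begin

lemma ev_ln_pos: "eventually (\<lambda>x::real. ln x > 0) at_top"
  using eventually_gt_at_top[of 1] by eventually_elim simp

lemma ln_pow_eq: "eventually (\<lambda>x::real. ln x powr real m = ln x ^ m) at_top"
  using ev_ln_pos by eventually_elim (simp add: powr_realpow)

lemma L_ln_pow_o:
  assumes "(d::real) > 0"
  shows "(\<lambda>x::real. ln x ^ m) \<in> o(\<lambda>x. x powr d)"
proof -
  have "(\<lambda>x::real. ln (ln x)) \<in> o(\<lambda>x. ln x)"
  proof (rule smalloI_tendsto)
    show "((\<lambda>x::real. ln (ln x) / ln x) \<longlongrightarrow> 0) at_top"
      by (rule filterlim_compose[OF ln_x_over_x_tendsto_0 ln_at_top])
    show "eventually (\<lambda>x::real. ln x \<noteq> 0) at_top"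
      using ev_ln_pos by eventually_elim simp
  qed
  then have h: "(\<lambda>x::real. ln x powr real m) \<in> o(\<lambda>x. x powr d)"
    by (rule ln_smallo_imp_flat[OF ln_at_top filterlim_ident _ assms])
  from landau_o.small.in_cong[OF ln_pow_eq] h show ?thesis by (rule iffD1)
qed

lemma L_ln_pow_mono:
  assumes "(m::nat) < m'"
  shows "(\<lambda>x::real. ln x ^ m) \<in> o(\<lambda>x. ln x ^ m')"
proof -
  have "(\<lambda>x::real. ln x powr real m) \<in> o(\<lambda>x. ln x powr real m')"
    using powr_smallo_iff[OF ln_at_top, of "real m" "real m'"] assms by simp
  then have "(\<lambda>x::real. ln x ^ m) \<in> o(\<lambda>x. ln x powr real m')"
    by (rule iffD1[OF landau_o.small.in_cong[OF ln_pow_eq]])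
  then show ?thesis by (simp only: landau_o.small.cong[OF ln_pow_eq[of m']])
qed

lemma L_one: "(\<lambda>x::real. 1) \<in> O(\<lambda>x. ln x ^ m)"
proof -
  have h: "(\<lambda>x::real. ln x powr real 0) \<in> O(\<lambda>x. ln x powr real m)"
    using powr_bigo_iff[OF ln_at_top, of "real 0" "real m"] by simp
  have ev: "eventually (\<lambda>x::real. ln x powr real 0 = 1) at_top"
    using ev_ln_pos
    by eventually_elim simp
  from landau_o.big.in_cong[OF ev] h have "(\<lambda>x::real. 1) \<in> O(\<lambda>x. ln x powr real m)"
    by (rule iffD1)
  then show ?thesis by (simp only: landau_o.big.cong[OF ln_pow_eq[of m]])
qed

lemma L_A:
  assumes "(e::real) < e'"
  shows "(\<lambda>x::real. ln x ^ m * x powr (-e')) \<in> o(\<lambda>x. ln x ^ m' * x powr (-e))"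
proof -
  have "(\<lambda>x::real. ln x ^ m * x powr (-e')) \<in> o(\<lambda>x. x powr (e' - e) * x powr (-e'))"
    using L_ln_pow_o[of "e' - e" m] assms by (intro landau_o.small.mult_right) simp
  also have "eventually (\<lambda>x::real. x powr (e' - e) * x powr (-e') = x powr (-e)) at_top"
    using eventually_gt_at_top[of 0] by eventually_elim (simp add: powr_add[symmetric])
  then have "o(\<lambda>x::real. x powr (e' - e) * x powr (-e')) = o(\<lambda>x. x powr (-e))"
    by (rule landau_o.small.cong)
  also have "(\<lambda>x::real. x powr (-e)) \<in> O(\<lambda>x. ln x ^ m' * x powr (-e))"
    using landau_o.big_mult_1'[OF L_one[of m'], of "\<lambda>x. x powr (-e)" "\<lambda>x. x powr (-e)"] by simp
  finally show ?thesis .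
qed

lemma L_B:
  assumes "(m::nat) < m'"
  shows "(\<lambda>x::real. ln x ^ m * x powr (-e)) \<in> o(\<lambda>x. ln x ^ m' * x powr (-e))"
  using L_ln_pow_mono[OF assms] by (rule landau_o.small.mult_right)

lemma L_C:
  assumes "(e::real) < p"
  shows "(\<lambda>x::real. x powr (-p)) \<in> o(\<lambda>x. ln x ^ m * x powr (-e))"
proof -
  have "(\<lambda>x::real. x powr (-p)) \<in> o(\<lambda>x. x powr (-e))"
    using powr_smallo_iff[OF filterlim_ident, of "-p" "-e"] assms by simp
  also have "(\<lambda>x::real. x powr (-e)) \<in> O(\<lambda>x. ln x ^ m * x powr (-e))"
    using landau_o.big_mult_1'[OF L_one[of m], of "\<lambda>x. x powr (-e)" "\<lambda>x. x powr (-e)"] by simp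
  finally show ?thesis .
qed

lemma N_A: "(e::real) < e' \<Longrightarrow> (\<lambda>n::nat. ln (real n) ^ m * real n powr (-e')) \<in> o(\<lambda>n. ln (real n) ^ m' * real n powr (-e))"
  by (rule smallo_real_nat_transfer[OF L_A])
lemma N_B: "(m::nat) < m' \<Longrightarrow> (\<lambda>n::nat. ln (real n) ^ m * real n powr (-e)) \<in> o(\<lambda>n. ln (real n) ^ m' * real n powr (-e))"
  by (rule smallo_real_nat_transfer[OF L_B])
lemma N_C: "(e::real) < p \<Longrightarrow> (\<lambda>n::nat. real n powr (-p)) \<in> o(\<lambda>n. ln (real n) ^ m * real n powr (-e))"
  by (rule smallo_real_nat_transfer[OF L_C])

lemma idx_finite:
  assumes "rho > 0"
  shows "finite (idx_set rho p)"
proof -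
  define N where "N = nat \<lceil>p / rho\<rceil> + nat \<lceil>p\<rceil>"
  have "idx_set rho p \<subseteq> {..N} \<times> {..N} \<times> {..N}"
  proof (rule subsetI)
    fix t assume "t \<in> idx_set rho p"
    moreover obtain k l m where tt: "t = (k, l, m)" by (cases t) auto
    ultimately have "(k, l, m) \<in> idx_set rho p" by simp
    then have h: "1 \<le> k" "m \<le> l" "real k * rho + real l + 1 < p" by (auto simp: idx_set_def)
    have "real k * rho < p" using h by simp
    then have "real k < p / rho" using assms by (simp add: pos_less_divide_eq)
    then have "real k \<le> of_int \<lceil>p / rho\<rceil>" by linarith
    then have k: "k \<le> nat \<lceil>p / rho\<rceil>" by linarith
    have "real l \<le> of_int \<lceil>p\<rceil>" using h assms
      by (smt (verit, best) le_of_int_ceiling mult_nonneg_nonneg of_nat_0_le_iff)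
    then have l: "l \<le> nat \<lceil>p\<rceil>" by linarith
    show "t \<in> {..N} \<times> {..N} \<times> {..N}" using k l h tt by (auto simp: N_def)
  qed
  then show ?thesis by (rule finite_subset) auto
qed

theorem lemma4p4:
  fixes rho p :: real and a :: "nat \<Rightarrow> nat \<Rightarrow> nat \<Rightarrow> complex"
  assumes "rho > 0" and "rho \<notin> \<rat>" and "p > 0"
    and "(\<lambda>n::nat. \<Sum>(k, l, m)\<in>idx_set rho p.
            a k l m * complex_of_real ((ln (real n)) ^ m / real n powr (real k * rho + real l + 1)))
         \<in> O(\<lambda>n. complex_of_real (real n powr (- p)))"
  shows "\<forall>(k, l, m)\<in>idx_set rho p. a k l m = 0"
proof (rule ccontr)
  define I where "I = idx_set rho p"
  define A where "A = (\<lambda>(k,l,m). a k l m)"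
  define ex where "ex = (\<lambda>(k::nat,l::nat,m::nat). real k * rho + real l + 1)"
  define mm where "mm = (\<lambda>t::nat\<times>nat\<times>nat. snd (snd t))"
  define g where "g = (\<lambda>t (n::nat). ln (real n) ^ mm t * real n powr (- ex t))"
  assume "\<not> (\<forall>(k, l, m)\<in>idx_set rho p. a k l m = 0)"
  then obtain k1 l1 m1 where "(k1,l1,m1) \<in> I" "a k1 l1 m1 \<noteq> 0" by (auto simp: I_def)
  then have t1: "(k1,l1,m1) \<in> I" "A (k1,l1,m1) \<noteq> 0" by (auto simp: A_def)
  have finI: "finite I" unfolding I_def by (rule idx_finite[OF assms(1)])
  define S where "S = {t\<in>I. A t \<noteq> 0}"
  have finS: "finite S" and SI: "S \<subseteq> I" using finI by (auto simp: S_def)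
  have Sne: "S \<noteq> {}" using t1 by (auto simp: S_def)
  define e0 where "e0 = Min (ex ` S)"
  define S0 where "S0 = {t\<in>S. ex t = e0}"
  have e0in: "e0 \<in> ex ` S" unfolding e0_def using finS Sne by (intro Min_in) auto
  have e0le: "\<And>t. t \<in> S \<Longrightarrow> e0 \<le> ex t" unfolding e0_def using finS by auto
  have finS0: "finite S0" using finS by (auto simp: S0_def)
  have S0ne: "S0 \<noteq> {}" using e0in by (auto simp: S0_def)
  define m0 where "m0 = Max (mm ` S0)"
  have "m0 \<in> mm ` S0" unfolding m0_def using finS0 S0ne by (intro Max_in) auto
  then obtain t0 where t0: "t0 \<in> S0" "mm t0 = m0" by auto
  have m0ge: "\<And>t. t \<in> S0 \<Longrightarrow> mm t \<le> m0" unfolding m0_def using finS0 by auto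
  have t0S: "t0 \<in> S" and t0I: "t0 \<in> I" and At0: "A t0 \<noteq> 0" and ex0: "ex t0 = e0"
    using t0 SI by (auto simp: S0_def S_def)
  have uniq: "fst t = fst t0 \<and> fst (snd t) = fst (snd t0)" if "t \<in> S0" for t
  proof -
    obtain k l m where t: "t = (k,l,m)" by (cases t) auto
    obtain k0 l0 m0' where tt0: "t0 = (k0,l0,m0')" by (cases t0) auto
    have eq: "real k * rho + real l = real k0 * rho + real l0"
      using that t0 t tt0 by (auto simp: S0_def ex_def)
    have "k = k0"
    proof (rule ccontr)
      assume "k \<noteq> k0"
      then have nz: "real k - real k0 \<noteq> 0" by simp
      have "(real k - real k0) * rho = real l0 - real l" using eq by (simp add: algebra_simps)
      then have "rho = (real l0 - real l) / (real k - real k0)" using nz by (simp add: field_simps)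
      also have "\<dots> \<in> \<rat>" by (intro Rats_divide Rats_diff) auto
      finally show False using assms(2) by simp
    qed
    then have "l = l0" using eq by simp
    then show ?thesis using \<open>k = k0\<close> t tt0 by simp
  qed
  have small: "g t \<in> o(g t0)" if "t \<in> S - {t0}" for t
  proof (cases "ex t = e0")
    case True
    then have tS0: "t \<in> S0" using that by (auto simp: S0_def)
    have "mm t \<noteq> m0"
    proof
      assume "mm t = m0"
      then have "t = t0" using uniq[OF tS0] t0 by (auto simp: mm_def prod_eq_iff)
      then show False using that by simp
    qed
    then have "mm t < mm t0" using m0ge[OF tS0] t0 by simp
    then show ?thesis unfolding g_def using True ex0 N_B by simp
  next
    case False
    have "t \<in> S" using that by simp
    then have "e0 \<le> ex t" by (rule e0le)
    then have "ex t0 < ex t" using False ex0 by linarith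
    then show ?thesis unfolding g_def by (rule N_A)
  qed
  define F where "F = (\<lambda>n. \<Sum>t\<in>I. A t * complex_of_real (g t n))"
  have Feq: "F = (\<lambda>n::nat. \<Sum>(k, l, m)\<in>idx_set rho p.
            a k l m * complex_of_real ((ln (real n)) ^ m / real n powr (real k * rho + real l + 1)))"
    unfolding F_def I_def
  proof (intro ext sum.cong refl)
    fix n :: nat and t :: "nat \<times> nat \<times> nat"
    obtain k l m where tt: "t = (k, l, m)" by (cases t) auto
    have "real n powr (- (real k * rho + real l + 1)) = inverse (real n powr (real k * rho + real l + 1))"
      by (rule powr_minus)
    then show "A t * complex_of_real (g t n) = (case t of (k, l, m) \<Rightarrow>
            a k l m * complex_of_real ((ln (real n)) ^ m / real n powr (real k * rho + real l + 1)))"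
      unfolding tt A_def g_def ex_def mm_def by (simp add: divide_inverse)
  qed
  define R where "R = (\<lambda>n. \<Sum>t\<in>I - {t0}. A t * complex_of_real (g t n))"
  have FR: "F n = A t0 * complex_of_real (g t0 n) + R n" for n
    unfolding F_def R_def using finI t0I by (simp add: sum.remove)
  have R: "R \<in> o(\<lambda>n. complex_of_real (g t0 n))"
    unfolding R_def
  proof (rule big_sum_in_smallo)
    fix t assume tI: "t \<in> I - {t0}"
    show "(\<lambda>n. A t * complex_of_real (g t n)) \<in> o(\<lambda>n. complex_of_real (g t0 n))"
    proof (cases "A t = 0")
      case True then show ?thesis by simp
    next
      case False
      then have "t \<in> S - {t0}" using tI by (auto simp: S_def)
      then have "g t \<in> o(g t0)" by (rule small)
      then have "(\<lambda>n. complex_of_real (g t n)) \<in> o(\<lambda>n. complex_of_real (g t0 n))"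
        by (simp add: landau_o.small.of_real_iff)
      then show ?thesis using False by simp
    qed
  qed
  have "e0 < p" using t0I ex0 by (cases t0) (auto simp: I_def idx_set_def ex_def)
  then have "(\<lambda>n::nat. real n powr (-p)) \<in> o(g t0)" unfolding g_def using ex0 N_C by simp
  then have C: "(\<lambda>n::nat. complex_of_real (real n powr (-p))) \<in> o(\<lambda>n. complex_of_real (g t0 n))"
    by (simp add: landau_o.small.of_real_iff)
  have "F \<in> O(\<lambda>n. complex_of_real (real n powr (- p)))" using assms(4) Feq by simp
  then have "F \<in> o(\<lambda>n. complex_of_real (g t0 n))" using C by (rule landau_o.big_small_trans)
  then have "(\<lambda>n. F n - R n) \<in> o(\<lambda>n. complex_of_real (g t0 n))"
    using R by (rule sum_in_smallo(2))
  then have "(\<lambda>n. A t0 * complex_of_real (g t0 n)) \<in> o(\<lambda>n. complex_of_real (g t0 n))"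
    using FR by simp
  then have "(\<lambda>n. complex_of_real (g t0 n)) \<in> o(\<lambda>n. complex_of_real (g t0 n))"
    using At0 by simp
  then have ev0: "eventually (\<lambda>n. complex_of_real (g t0 n) = 0) sequentially"
    by (simp add: landau_o.small_refl_iff)
  have evpos: "eventually (\<lambda>n::nat. g t0 n > 0) sequentially"
    using eventually_ge_at_top[of "2::nat"]
  proof eventually_elim
    case (elim n)
    then have "real n > 1" by simp
    then have "ln (real n) > 0" by simp
    then show ?case unfolding g_def using \<open>real n > 1\<close> by simp
  qed
  have "eventually (\<lambda>n::nat. False) sequentially"
    using eventually_conj[OF ev0 evpos]
  proof (rule eventually_mono)
    fix n assume h: "complex_of_real (g t0 n) = 0 \<and> g t0 n > 0"
    then have "g t0 n = 0" by simp
    with h show False by linarith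
  qed
  then show False by simp
qed
end
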